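(* Let $n\geq1$ and $p<0$. There exists a positive constant $C_{n,p}$ depending only on $n$ and $p$ such that $u(x)\leq C_{n,p}$ for all $x\in\mathbb{S}^n$ and all $u\in\mathcal{B}$, where $$\mathcal{B}=\Big\{u\in H^*_+(\mathbb{S}^n):\ u \text{ is } (n+2)\text{-symmetric},\ \int_{\mathbb{S}^n}u^p\,d\sigma=|\mathbb{S}^n|\Big\}.$$
   Context: Fix $n+2$ points $q_1,\dots,q_{n+2}\in\mathbb{S}^n\subset\mathbb{R}^{n+1}$ spread evenly on $\mathbb{S}^n$, i.e. the vertices of a regular simplex inscribed in $\mathbb{S}^n$ ($\langle q_i,q_j\rangle=-\frac1{n+1}$ for $i\neq j$). Let $\mathcal{S}_{n+2}(q)$ be the set of rotations $\phi\in SO(n+1)$ mapping the set $\{q_1,\dots,q_{n+2}\}$ onto itself. A function $u$ on $\mathbb{S}^n$ (or on $\mathbb{R}^{n+1}$) is $(n+2)$-symmetric if $u\circ\phi=u$ for all $\phi\in\mathcal{S}_{n+2}(q)$. $H^*_+(\mathbb{S}^n)$ denotes the set of support functions $u$ of convex bodies $\Omega_u\subset\mathbb{R}^{n+1}$ with $u>0$ on $\mathbb{S}^n$ and finite volume $|\Omega_u|<\infty$. $d\sigma$ is the standard surface measure of $\mathbb{S}^n$ and $|\mathbb{S}^n|$ its total measure. *)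

theory Defs
  imports "HOL-Analysis.Analysis"
begin

text \<open>Ambient space R^(n+1) is the type real ^ ('n::finite) with CARD('n) = n+1;
  the unit sphere S^n is sphere 0 1.\<close>

text \<open>Integral over the unit sphere against the standard surface measure,
  via the cone-measure identity: the integral of f over S^n equals (n+1) times
  the Lebesgue integral over the unit ball of f(x/|x|).\<close>
definition sphere_integral :: "(real ^ ('n::finite) \<Rightarrow> real) \<Rightarrow> real" where
  "sphere_integral f =
     real CARD('n) * integral (cball (0::real ^ ('n::finite)) 1) (\<lambda>x. f (x /\<^sub>R norm x))"

definition sphere_area :: "('n::finite) itself \<Rightarrow> real" where
  "sphere_area _ = sphere_integral (\<lambda>x::real ^ ('n::finite). 1)"

definition support_fun :: "(real ^ ('n::finite)) set \<Rightarrow> real ^ ('n::finite) \<Rightarrow> real" where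
  "support_fun K x = Sup ((\<lambda>y. x \<bullet> y) ` K)"

definition Hstar_plus :: "(real ^ ('n::finite) \<Rightarrow> real) set" where
  "Hstar_plus = {u. \<exists>K. compact K \<and> convex K \<and> interior K \<noteq> {} \<and>
       emeasure lebesgue K < \<infinity> \<and> u = support_fun K \<and>
       (\<forall>x\<in>sphere 0 1. u x > 0)}"

definition regular_simplex :: "(nat \<Rightarrow> real ^ ('n::finite)) \<Rightarrow> bool" where
  "regular_simplex q \<longleftrightarrow>
     (\<forall>i < CARD('n) + 1. norm (q i) = 1) \<and>
     (\<forall>i < CARD('n) + 1. \<forall>j < CARD('n) + 1. i \<noteq> j \<longrightarrow>
         q i \<bullet> q j = - 1 / real CARD('n))"

definition sym_group :: "(nat \<Rightarrow> real ^ ('n::finite)) \<Rightarrow> (real ^ ('n::finite) \<Rightarrow> real ^ ('n::finite)) set" where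
  "sym_group q = {\<phi>. orthogonal_transformation \<phi> \<and> det (matrix \<phi>) = 1 \<and>
       \<phi> ` (q ` {..<CARD('n) + 1}) = q ` {..<CARD('n) + 1}}"

definition symmetric_wrt :: "(nat \<Rightarrow> real ^ ('n::finite)) \<Rightarrow> (real ^ ('n::finite) \<Rightarrow> real) \<Rightarrow> bool" where
  "symmetric_wrt q u \<longleftrightarrow> (\<forall>\<phi>\<in>sym_group q. u \<circ> \<phi> = u)"

definition classB :: "(nat \<Rightarrow> real ^ ('n::finite)) \<Rightarrow> real \<Rightarrow> (real ^ ('n::finite) \<Rightarrow> real) set" where
  "classB q p = {u \<in> Hstar_plus. symmetric_wrt q u \<and>
       sphere_integral (\<lambda>x. u x powr p) = sphere_area TYPE('n)}"

end

theory Submission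
  imports Defs
begin

definition rf :: "real^'n \<Rightarrow> real^'n \<Rightarrow> real^'n" where
  "rf w x = x - (2 * (x \<bullet> w) / (w \<bullet> w)) *\<^sub>R w"

lemma rf_linear: "linear (rf w)"
  unfolding rf_def by (intro linearI) (auto simp: algebra_simps inner_add_left add_divide_distrib)

lemma rf_adj: "rf w x \<bullet> y = x \<bullet> rf w y"
  unfolding rf_def by (simp add: inner_diff_left inner_diff_right algebra_simps inner_commute)

lemma rf_invol: "w \<noteq> 0 \<Longrightarrow> rf w (rf w x) = x"
  unfolding rf_def by (simp add: inner_diff_left algebra_simps)

lemma rf_orth: "orthogonal_transformation (rf w)"
  unfolding orthogonal_transformation_def
proof (intro conjI allI rf_linear)
  fix v u show "rf w v \<bullet> rf w u = v \<bullet> u"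
  proof (cases "w = 0")
    case True then show ?thesis by (simp add: rf_def)
  next
    case False
    then show ?thesis by (simp add: rf_adj[symmetric] rf_invol)
  qed
qed

lemma rf_det_eq:
  fixes v w :: "real^'n"
  assumes "norm v = norm w"
  shows "det (matrix (rf w)) = det (matrix (rf v))"
proof -
  obtain f where f: "orthogonal_transformation f" "f v = w"
    using orthogonal_transformation_exists[of v w] assms by blast
  have lf: "linear f" using f(1) by (simp add: orthogonal_transformation_def)
  have ww: "w \<bullet> w = v \<bullet> v" using assms by (simp add: dot_square_norm)
  have "rf w \<circ> f = f \<circ> rf v"
  proof
    fix x
    have "f x \<bullet> w = x \<bullet> v" using f by (metis orthogonal_transformation_def)
    then show "(rf w \<circ> f) x = (f \<circ> rf v) x"
      unfolding rf_def using lf f(2) ww by (simp add: linear_diff linear_scale)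
  qed
  then have "matrix (rf w) ** matrix f = matrix f ** matrix (rf v)"
    using matrix_compose[OF lf rf_linear] matrix_compose[OF rf_linear lf] by metis
  then have "det (matrix (rf w)) * det (matrix f) = det (matrix f) * det (matrix (rf v))"
    by (metis det_mul)
  moreover have "det (matrix f) \<noteq> 0" using orthogonal_transformation_det[OF f(1)] by auto
  ultimately show ?thesis by simp
qed

lemma rf2_det:
  fixes v w :: "real^'n"
  assumes "norm v = norm w"
  shows "det (matrix (rf w \<circ> rf v)) = 1"
proof -
  have "det (matrix (rf w \<circ> rf v)) = det (matrix (rf w)) * det (matrix (rf v))"
    by (simp add: matrix_compose[OF rf_linear rf_linear] det_mul)
  also have "\<dots> = det (matrix (rf v)) * det (matrix (rf v))" using rf_det_eq[OF assms] by simp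
  also have "\<dots> = \<bar>det (matrix (rf v))\<bar> * \<bar>det (matrix (rf v))\<bar>" by (rule abs_mult_self_eq[symmetric])
  also have "\<dots> = 1" using orthogonal_transformation_det[OF rf_orth[of v]] by simp
  finally show ?thesis .
qed

locale rsimp =
  fixes q :: "nat \<Rightarrow> real ^ 'n"
  assumes rs: "regular_simplex q" and d2: "CARD('n) \<ge> 2"
begin

lemma qnorm: "i < CARD('n) + 1 \<Longrightarrow> q i \<bullet> q i = 1"
  using rs unfolding regular_simplex_def by (simp add: dot_square_norm)

lemma qinner: "i < CARD('n) + 1 \<Longrightarrow> j < CARD('n) + 1 \<Longrightarrow> i \<noteq> j \<Longrightarrow> q i \<bullet> q j = - 1 / real CARD('n)"
  using rs unfolding regular_simplex_def by simp

lemma dpos: "real CARD('n) > 0" by simp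

lemma dd_nz: "real CARD('n) + real CARD('n) * real CARD('n) \<noteq> 0"
proof -
  have "real CARD('n) * real CARD('n) \<ge> 0" by simp
  with dpos have "real CARD('n) + real CARD('n) * real CARD('n) > 0" by linarith
  then show ?thesis by simp
qed

lemma sum_inner_q: "i < CARD('n) + 1 \<Longrightarrow> (\<Sum>j<CARD('n)+1. q i \<bullet> q j) = 0"
proof -
  assume i: "i < CARD('n) + 1"
  have "(\<Sum>j<CARD('n)+1. q i \<bullet> q j) = q i \<bullet> q i + (\<Sum>j\<in>{..<CARD('n)+1} - {i}. q i \<bullet> q j)"
    using i by (subst sum.remove[of _ i]) auto
  also have "(\<Sum>j\<in>{..<CARD('n)+1} - {i}. q i \<bullet> q j) = (\<Sum>j\<in>{..<CARD('n)+1} - {i}. - 1 / real CARD('n))"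
    using i by (intro sum.cong) (auto simp: qinner)
  also have "\<dots> = - 1" using i by simp
  finally show ?thesis using i qnorm by simp
qed

lemma sumq: "(\<Sum>k<CARD('n)+1. q k) = 0"
proof -
  have "(\<Sum>k<CARD('n)+1. q k) \<bullet> (\<Sum>k<CARD('n)+1. q k) = (\<Sum>i<CARD('n)+1. \<Sum>j<CARD('n)+1. q i \<bullet> q j)"
    by (simp only: inner_sum_left inner_sum_right) (rule sum.swap)
  also have "\<dots> = 0" by (rule sum.neutral) (use sum_inner_q in auto)
  finally show ?thesis by simp
qed

lemma sum_inner_zero: "(\<Sum>k<CARD('n)+1. z \<bullet> q k) = 0"
  using sumq by (metis inner_sum_right inner_zero_right)

lemma inj_q: "inj_on q {..<CARD('n)+1}"
proof (rule inj_onI, rule ccontr)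
  fix i j assume ij: "i \<in> {..<CARD('n)+1}" "j \<in> {..<CARD('n)+1}" "q i = q j" "i \<noteq> j"
  then have "q i \<bullet> q j = 1" using qnorm ij by simp
  moreover have "q i \<bullet> q j = -1 / real CARD('n)" using ij qinner by blast
  ultimately show False by (simp add: field_simps) 
qed

lemma indep: "independent (q ` {..<CARD('n)})"
proof
  assume "dependent (q ` {..<CARD('n)})"
  then obtain a where a: "\<exists>v\<in>q ` {..<CARD('n)}. a v \<noteq> 0" "(\<Sum>v\<in>q ` {..<CARD('n)}. a v *\<^sub>R v) = 0"
    by (auto simp: dependent_finite)
  have inj: "inj_on q {..<CARD('n)}" using inj_q by (rule inj_on_subset) auto
  have s0: "(\<Sum>i<CARD('n). a (q i) *\<^sub>R q i) = 0" using a(2) by (simp add: sum.reindex[OF inj])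
  define A where "A = (\<Sum>i<CARD('n). a (q i))"
  have eq: "a (q j) * (1 + 1 / real CARD('n)) = A / real CARD('n)" if j: "j < CARD('n)" for j
  proof -
    have "0 = (\<Sum>i<CARD('n). a (q i) *\<^sub>R q i) \<bullet> q j" using s0 by simp
    also have "\<dots> = (\<Sum>i<CARD('n). a (q i) * (q i \<bullet> q j))" by (simp add: inner_sum_left)
    also have "\<dots> = a (q j) * (q j \<bullet> q j) + (\<Sum>i\<in>{..<CARD('n)} - {j}. a (q i) * (q i \<bullet> q j))"
      using j by (subst sum.remove[of _ j]) auto
    also have "(\<Sum>i\<in>{..<CARD('n)} - {j}. a (q i) * (q i \<bullet> q j)) = (\<Sum>i\<in>{..<CARD('n)} - {j}. a (q i) * (- 1 / real CARD('n)))"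
      using j by (intro sum.cong) (auto simp: qinner)
    also have "\<dots> = (\<Sum>i\<in>{..<CARD('n)} - {j}. a (q i)) * (- 1 / real CARD('n))"
      by (simp only: sum_distrib_right)
    also have "(\<Sum>i\<in>{..<CARD('n)} - {j}. a (q i)) = A - a (q j)"
      using j by (simp add: A_def sum_diff1)
    finally show ?thesis using j qnorm[of j] by (simp add: field_simps)
  qed
  have "A * (1 + 1 / real CARD('n)) = (\<Sum>j<CARD('n). A / real CARD('n))"
    unfolding A_def sum_distrib_right using eq by (intro sum.cong) (auto simp: A_def)
  also have "\<dots> = A" by simp
  finally have "A = 0" by (simp add: field_simps)
  moreover have "1 + 1 / real CARD('n) \<noteq> 0"
  proof -
    have "1 / real CARD('n) > 0" by simp
    then show ?thesis by linarith
  qed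
  ultimately have "\<forall>j<CARD('n). a (q j) = 0" using eq by simp
  then show False using a(1) by auto
qed

lemma span_q: "span (q ` {..<CARD('n)}) = UNIV"
proof -
  have inj: "inj_on q {..<CARD('n)}" using inj_q by (rule inj_on_subset) auto
  have "card (q ` {..<CARD('n)}) = dim (UNIV :: (real^'n) set)"
    using inj by (simp add: card_image)
  then have "UNIV \<subseteq> span (q ` {..<CARD('n)})"
    using card_eq_dim[of "q ` {..<CARD('n)}" UNIV] indep by auto
  then show ?thesis by auto
qed

lemma orth_zero: assumes "\<And>j. j < CARD('n) + 1 \<Longrightarrow> w \<bullet> q j = 0" shows "w = 0"
proof -
  have "orthogonal w w"
    by (rule orthogonal_to_span[of w "q ` {..<CARD('n)}"]) (use span_q assms in \<open>auto simp: orthogonal_def\<close>)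
  then show ?thesis by (simp add: orthogonal_def)
qed


lemma frame: "(\<Sum>k<CARD('n)+1. (z \<bullet> q k) *\<^sub>R q k) = ((real CARD('n) + 1) / real CARD('n)) *\<^sub>R z"
proof -
  define w where "w = (\<Sum>k<CARD('n)+1. (z \<bullet> q k) *\<^sub>R q k) - ((real CARD('n) + 1) / real CARD('n)) *\<^sub>R z"
  have "w \<bullet> q j = 0" if j: "j < CARD('n) + 1" for j
  proof -
    have "(\<Sum>k<CARD('n)+1. (z \<bullet> q k) *\<^sub>R q k) \<bullet> q j = (\<Sum>k<CARD('n)+1. (z \<bullet> q k) * (q k \<bullet> q j))"
      by (simp only: inner_sum_left inner_scaleR_left)
    also have "\<dots> = (z \<bullet> q j) * (q j \<bullet> q j) + (\<Sum>k\<in>{..<CARD('n)+1} - {j}. (z \<bullet> q k) * (q k \<bullet> q j))"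
      using j by (subst sum.remove[of _ j]) auto
    also have "(\<Sum>k\<in>{..<CARD('n)+1} - {j}. (z \<bullet> q k) * (q k \<bullet> q j)) = (\<Sum>k\<in>{..<CARD('n)+1} - {j}. (z \<bullet> q k) * (- 1 / real CARD('n)))"
      using j by (intro sum.cong) (auto simp: qinner)
    also have "\<dots> = (\<Sum>k\<in>{..<CARD('n)+1} - {j}. z \<bullet> q k) * (- 1 / real CARD('n))"
      by (simp only: sum_distrib_right)
    also have "(\<Sum>k\<in>{..<CARD('n)+1} - {j}. z \<bullet> q k) = - (z \<bullet> q j)"
      using j sum_inner_zero[of z] by (simp add: sum_diff1)
    finally have "(\<Sum>k<CARD('n)+1. (z \<bullet> q k) *\<^sub>R q k) \<bullet> q j = (z \<bullet> q j) * (1 + 1 / real CARD('n))"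
      using qnorm[OF j] by (simp add: algebra_simps)
    then show ?thesis unfolding w_def by (simp add: inner_diff_left field_simps)
  qed
  then have "w = 0" by (rule orth_zero)
  then show ?thesis unfolding w_def by simp
qed

lemma frame_inner: "x \<bullet> z = (real CARD('n) / (real CARD('n) + 1)) * (\<Sum>k<CARD('n)+1. (x \<bullet> q k) * (z \<bullet> q k))"
proof -
  have "x \<bullet> (\<Sum>k<CARD('n)+1. (z \<bullet> q k) *\<^sub>R q k) = ((real CARD('n) + 1) / real CARD('n)) * (x \<bullet> z)"
    by (simp only: frame inner_scaleR_right)
  moreover have "x \<bullet> (\<Sum>k<CARD('n)+1. (z \<bullet> q k) *\<^sub>R q k) = (\<Sum>k<CARD('n)+1. (x \<bullet> q k) * (z \<bullet> q k))"
    by (simp only: inner_sum_right inner_scaleR_right) (rule sum.cong; simp)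
  ultimately show ?thesis by (simp add: field_simps)
qed


lemma wnorm2: "i < CARD('n)+1 \<Longrightarrow> j < CARD('n)+1 \<Longrightarrow> i \<noteq> j \<Longrightarrow> (q i - q j) \<bullet> (q i - q j) = 2 + 2 / real CARD('n)"
  using qnorm[of i] qnorm[of j] qinner[of i j] by (simp add: inner_diff_left inner_diff_right inner_commute)

lemma wnorm_eq: "i < CARD('n)+1 \<Longrightarrow> j < CARD('n)+1 \<Longrightarrow> i \<noteq> j \<Longrightarrow> k < CARD('n)+1 \<Longrightarrow> l < CARD('n)+1 \<Longrightarrow> k \<noteq> l
   \<Longrightarrow> norm (q i - q j) = norm (q k - q l)"
  using wnorm2[of i j] wnorm2[of k l] by (simp add: norm_eq)

lemma coef: "2 / (2 + 2 / real CARD('n)) = real CARD('n) / (real CARD('n) + 1)"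
proof -
  have h: "real CARD('n) + real CARD('n) * real CARD('n) \<noteq> 0"
  proof -
    have "real CARD('n) * real CARD('n) \<ge> 0" by simp
    with dpos have "real CARD('n) + real CARD('n) * real CARD('n) > 0" by linarith
    then show ?thesis by simp
  qed
  show ?thesis using h by (simp add: field_simps)
qed

lemma rf_formula: "i < CARD('n)+1 \<Longrightarrow> j < CARD('n)+1 \<Longrightarrow> i \<noteq> j \<Longrightarrow>
  rf (q i - q j) z = z - (real CARD('n) / (real CARD('n) + 1) * (z \<bullet> q i - z \<bullet> q j)) *\<^sub>R (q i - q j)"
proof -
  assume a: "i < CARD('n)+1" "j < CARD('n)+1" "i \<noteq> j"
  have "2 * (z \<bullet> (q i - q j)) / ((q i - q j) \<bullet> (q i - q j)) = (2 / (2 + 2 / real CARD('n))) * (z \<bullet> (q i - q j))"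
    using wnorm2[OF a] by simp
  also have "\<dots> = real CARD('n) / (real CARD('n) + 1) * (z \<bullet> q i - z \<bullet> q j)"
    by (simp only: coef inner_diff_right)
  finally show ?thesis unfolding rf_def by simp
qed

lemma rf_q: assumes "i < CARD('n)+1" "j < CARD('n)+1" "i \<noteq> j" "k < CARD('n)+1"
  shows "rf (q i - q j) (q k) = q (if k = i then j else if k = j then i else k)"
proof -
  have c: "real CARD('n) / (real CARD('n) + 1) * (1 + 1 / real CARD('n)) = 1"
    using dd_nz by (simp add: field_simps)
  have rf: "rf (q i - q j) (q k) = q k - (real CARD('n) / (real CARD('n) + 1) * (q k \<bullet> q i - q k \<bullet> q j)) *\<^sub>R (q i - q j)"
    by (rule rf_formula[OF assms(1-3)])
  show ?thesis
  proof (cases "k = i")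
    case True
    then have dl: "q k \<bullet> q i - q k \<bullet> q j = 1 + 1 / real CARD('n)" using assms qnorm qinner by simp
    have "rf (q i - q j) (q k) = q k - (real CARD('n) / (real CARD('n) + 1) * (1 + 1 / real CARD('n))) *\<^sub>R (q i - q j)"
      by (simp only: rf dl)
    then have "rf (q i - q j) (q k) = q k - (q i - q j)" by (simp only: c scaleR_one)
    then show ?thesis using True by simp
  next
    case ki: False
    show ?thesis
    proof (cases "k = j")
      case True
      then have dl: "q k \<bullet> q i - q k \<bullet> q j = - (1 + 1 / real CARD('n))" using assms qnorm qinner[of j i] by simp
      have "rf (q i - q j) (q k) = q k - (real CARD('n) / (real CARD('n) + 1) * (- (1 + 1 / real CARD('n)))) *\<^sub>R (q i - q j)"
        by (simp only: rf dl)
      then have "rf (q i - q j) (q k) = q k + (q i - q j)" by (simp only: c mult_minus_right scaleR_minus_left scaleR_one diff_minus_eq_add)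
      then show ?thesis using True ki by simp
    next
      case False
      have "q k \<bullet> q i - q k \<bullet> q j = 0" using qinner[of k i] qinner[of k j] assms ki False by simp
      then show ?thesis using False ki rf by simp
    qed
  qed
qed

lemma rf_img: assumes "i < CARD('n)+1" "j < CARD('n)+1" "i \<noteq> j"
  shows "rf (q i - q j) ` (q ` {..<CARD('n)+1}) = q ` {..<CARD('n)+1}"
proof -
  have sub: "rf (q i - q j) ` (q ` {..<CARD('n)+1}) \<subseteq> q ` {..<CARD('n)+1}"
  proof
    fix y assume "y \<in> rf (q i - q j) ` (q ` {..<CARD('n)+1})"
    then obtain k where k: "k < CARD('n)+1" "y = rf (q i - q j) (q k)" by auto
    then show "y \<in> q ` {..<CARD('n)+1}" using rf_q[OF assms k(1)] assms by auto
  qed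
  have nz: "q i - q j \<noteq> 0" using inj_q assms by (auto simp: inj_on_def)
  have "q ` {..<CARD('n)+1} \<subseteq> rf (q i - q j) ` (q ` {..<CARD('n)+1})"
  proof
    fix y assume y: "y \<in> q ` {..<CARD('n)+1}"
    then have "rf (q i - q j) y \<in> q ` {..<CARD('n)+1}" using sub by auto
    moreover have "y = rf (q i - q j) (rf (q i - q j) y)" using rf_invol[OF nz] by simp
    ultimately show "y \<in> rf (q i - q j) ` (q ` {..<CARD('n)+1})" by blast
  qed
  with sub show ?thesis by blast
qed

lemma G_mem: assumes "i < CARD('n)+1" "j < CARD('n)+1" "i \<noteq> j" "k < CARD('n)+1" "l < CARD('n)+1" "k \<noteq> l"
  shows "rf (q i - q j) \<circ> rf (q k - q l) \<in> sym_group q"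
  unfolding sym_group_def
proof (intro CollectI conjI)
  show "orthogonal_transformation (rf (q i - q j) \<circ> rf (q k - q l))"
    by (intro orthogonal_transformation_compose rf_orth)
  show "det (matrix (rf (q i - q j) \<circ> rf (q k - q l))) = 1"
    by (rule rf2_det) (rule wnorm_eq, use assms in auto)
  show "(rf (q i - q j) \<circ> rf (q k - q l)) ` q ` {..<CARD('n) + 1} = q ` {..<CARD('n) + 1}"
    using rf_img[OF assms(1-3)] rf_img[OF assms(4-6)] by (simp only: image_comp[symmetric])
qed

end

lemma supp_bdd: "compact K \<Longrightarrow> bdd_above ((\<lambda>y. x \<bullet> y) ` K)"
  by (intro bounded_imp_bdd_above compact_imp_bounded compact_continuous_image) (auto intro!: continuous_intros)

lemma supp_upper: "compact K \<Longrightarrow> y \<in> K \<Longrightarrow> x \<bullet> y \<le> support_fun K x"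
  unfolding support_fun_def by (rule cSup_upper) (auto intro: supp_bdd)

lemma supp_attain: assumes "compact K" "K \<noteq> {}" shows "\<exists>y\<in>K. support_fun K x = x \<bullet> y"
proof -
  have "continuous_on K (\<lambda>y. x \<bullet> y)" by (intro continuous_intros)
  then obtain y where y: "y \<in> K" "\<forall>z\<in>K. x \<bullet> z \<le> x \<bullet> y"
    using continuous_attains_sup[OF assms, of "\<lambda>y. x \<bullet> y"] by blast
  then have "support_fun K x = x \<bullet> y" unfolding support_fun_def by (intro cSup_eq_maximum) auto
  then show ?thesis using y by blast
qed

lemma supp_zero: "K \<noteq> {} \<Longrightarrow> support_fun K 0 = 0"
  unfolding support_fun_def by simp

locale sset = rsimp q for q :: "nat \<Rightarrow> real ^ 'n" +
  fixes K :: "(real ^ 'n) set" and u :: "real ^ 'n \<Rightarrow> real"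
  assumes cK: "compact K" and neK: "K \<noteq> {}" and uK: "u = support_fun K"
    and inv: "\<forall>\<phi>\<in>sym_group q. u \<circ> \<phi> = u" and pos: "\<forall>x\<in>sphere 0 1. u x > 0"
begin

definition FF where "FF z \<longleftrightarrow> (\<forall>x. x \<bullet> z \<le> u x)"

lemma uinv2: assumes "i < CARD('n)+1" "j < CARD('n)+1" "i \<noteq> j" "k < CARD('n)+1" "l < CARD('n)+1" "k \<noteq> l"
  shows "u (rf (q i - q j) (rf (q k - q l) x)) = u x"
  using inv G_mem[OF assms] by (metis comp_apply)

lemma u_upper: "y \<in> K \<Longrightarrow> x \<bullet> y \<le> u x"
  using supp_upper[OF cK] uK by simp

lemma u_attain: "\<exists>y\<in>K. u x = x \<bullet> y"
  using supp_attain[OF cK neK] uK by simp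

lemma FF_K: "y \<in> K \<Longrightarrow> FF y"
  unfolding FF_def using u_upper by blast

lemma FF_rf: assumes "FF z" "i < CARD('n)+1" "j < CARD('n)+1" "i \<noteq> j" "k < CARD('n)+1" "l < CARD('n)+1" "k \<noteq> l"
  shows "FF (rf (q i - q j) (rf (q k - q l) z))"
  unfolding FF_def
proof
  fix x
  have "x \<bullet> rf (q i - q j) (rf (q k - q l) z) = rf (q k - q l) (rf (q i - q j) x) \<bullet> z"
    by (simp add: rf_adj)
  also have "\<dots> \<le> u (rf (q k - q l) (rf (q i - q j) x))" using assms(1) by (simp add: FF_def)
  also have "\<dots> = u x" by (rule uinv2) (use assms in auto)
  finally show "x \<bullet> rf (q i - q j) (rf (q k - q l) z) \<le> u x" .
qed

lemma third: assumes "k < CARD('n)+1" "k \<noteq> 0" obtains j where "j < CARD('n)+1" "j \<noteq> 0" "j \<noteq> k"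
proof -
  have "CARD('n) \<ge> 2" by (rule d2)
  then show ?thesis using that[of "if k = 1 then 2 else 1"] assms by auto
qed

lemma q_trans: assumes "k < CARD('n)+1" "k \<noteq> 0" "j < CARD('n)+1" "j \<noteq> 0" "j \<noteq> k"
  shows "rf (q k - q j) (rf (q 0 - q j) (q 0)) = q k"
  using rf_q[of 0 j 0] rf_q[of k j j] assms by simp

lemma u_qk: assumes "k < CARD('n)+1" shows "u (q k) = u (q 0)"
proof (cases "k = 0")
  case False
  then obtain j where j: "j < CARD('n)+1" "j \<noteq> 0" "j \<noteq> k" using third assms by blast
  have "u (q k) = u (rf (q k - q j) (rf (q 0 - q j) (q 0)))" using q_trans[OF assms False j] by simp
  also have "\<dots> = u (q 0)" by (rule uinv2) (use assms j False in auto)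
  finally show ?thesis .
qed simp

lemma FF_trans: assumes "FF (c *\<^sub>R q 0)" "k < CARD('n)+1" shows "FF (c *\<^sub>R q k)"
proof (cases "k = 0")
  case False
  then obtain j where j: "j < CARD('n)+1" "j \<noteq> 0" "j \<noteq> k" using third assms by blast
  have "rf (q k - q j) (rf (q 0 - q j) (c *\<^sub>R q 0)) = c *\<^sub>R q k"
    using q_trans[OF assms(2) False j] by (simp add: linear_scale[OF rf_linear])
  moreover have "FF (rf (q k - q j) (rf (q 0 - q j) (c *\<^sub>R q 0)))"
    by (rule FF_rf) (use assms j False in auto)
  ultimately show ?thesis by simp
qed (use assms in simp)

definition "m = u (q 0)"

lemma qsphere: "k < CARD('n)+1 \<Longrightarrow> norm (q k) = 1"
  using rs unfolding regular_simplex_def by simp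

lemma mpos: "m > 0"
  unfolding m_def using pos qsphere[of 0] by simp

lemma abs_xq: "norm x = 1 \<Longrightarrow> k < CARD('n)+1 \<Longrightarrow> \<bar>x \<bullet> q k\<bar> \<le> 1"
  using Cauchy_Schwarz_ineq2[of x "q k"] qsphere[of k] by simp

lemma upper: assumes "norm x = 1" shows "u x \<le> real CARD('n) * m"
proof -
  obtain y where y: "y \<in> K" "u x = x \<bullet> y" using u_attain by blast
  have "(\<Sum>k<CARD('n)+1. (x \<bullet> q k) * (y \<bullet> q k)) = (\<Sum>k<CARD('n)+1. (x \<bullet> q k + 1) * (y \<bullet> q k)) - (\<Sum>k<CARD('n)+1. y \<bullet> q k)"
    by (simp only: distrib_right mult_1_left sum.distrib)
  also have "\<dots> = (\<Sum>k<CARD('n)+1. (x \<bullet> q k + 1) * (y \<bullet> q k))" using sum_inner_zero[of y] by simp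
  also have "\<dots> \<le> (\<Sum>k<CARD('n)+1. (x \<bullet> q k + 1) * m)"
  proof (rule sum_mono)
    fix k assume k: "k \<in> {..<CARD('n)+1}"
    have "y \<bullet> q k \<le> m" using u_upper[OF y(1), of "q k"] u_qk[of k] k by (simp add: m_def inner_commute)
    moreover have "x \<bullet> q k + 1 \<ge> 0" using abs_xq[OF assms, of k] k by simp
    ultimately show "(x \<bullet> q k + 1) * (y \<bullet> q k) \<le> (x \<bullet> q k + 1) * m" by (rule mult_left_mono)
  qed
  also have "\<dots> = (\<Sum>k<CARD('n)+1. x \<bullet> q k) * m + of_nat (card {..<CARD('n)+1}) * m"
    by (simp only: distrib_right sum.distrib sum_distrib_right[symmetric] mult_1_left sum_constant)
  also have "\<dots> = m * (real CARD('n) + 1)" using sum_inner_zero[of x] by simp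
  finally have h: "(\<Sum>k<CARD('n)+1. (x \<bullet> q k) * (y \<bullet> q k)) \<le> m * (real CARD('n) + 1)" .
  have "u x = (real CARD('n) / (real CARD('n) + 1)) * (\<Sum>k<CARD('n)+1. (x \<bullet> q k) * (y \<bullet> q k))"
    using y(2) frame_inner[of x y] by (simp only:)
  also have "\<dots> \<le> (real CARD('n) / (real CARD('n) + 1)) * (m * (real CARD('n) + 1))"
    by (rule mult_left_mono[OF h]) simp
  also have "\<dots> = real CARD('n) * m"
  proof -
    have "real CARD('n) + 1 > 0" by simp
    then show ?thesis by (simp add: field_simps)
  qed
  finally show ?thesis .
qed

end

lemma dsum_expand:
  fixes b :: "nat \<Rightarrow> real" and v :: "nat \<Rightarrow> 'a::real_vector"
  assumes "finite I"
  shows "(\<Sum>i\<in>I. \<Sum>j\<in>I. (b i - b j) *\<^sub>R (v i - v j)) =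
     (2 * real (card I)) *\<^sub>R (\<Sum>i\<in>I. b i *\<^sub>R v i) - 2 *\<^sub>R ((\<Sum>i\<in>I. b i) *\<^sub>R (\<Sum>i\<in>I. v i))"
proof -
  have e: "(b i - b j) *\<^sub>R (v i - v j) = (b i *\<^sub>R v i + b j *\<^sub>R v j) - (b i *\<^sub>R v j + b j *\<^sub>R v i)" for i j
    by (simp add: scaleR_diff_left scaleR_diff_right algebra_simps)
  have s1: "(\<Sum>i\<in>I. \<Sum>j\<in>I. b i *\<^sub>R v i + b j *\<^sub>R v j) = (2 * real (card I)) *\<^sub>R (\<Sum>i\<in>I. b i *\<^sub>R v i)"
  proof -
    have "(\<Sum>i\<in>I. \<Sum>j\<in>I. b i *\<^sub>R v i + b j *\<^sub>R v j) = (\<Sum>i\<in>I. real (card I) *\<^sub>R (b i *\<^sub>R v i) + (\<Sum>j\<in>I. b j *\<^sub>R v j))"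
      by (simp only: sum.distrib sum_constant_scaleR)
    also have "\<dots> = real (card I) *\<^sub>R (\<Sum>i\<in>I. b i *\<^sub>R v i) + real (card I) *\<^sub>R (\<Sum>j\<in>I. b j *\<^sub>R v j)"
      by (simp only: sum.distrib sum_constant_scaleR scaleR_sum_right)
    finally show ?thesis by (simp add: scaleR_add_left[symmetric])
  qed
  have f1: "(\<Sum>i\<in>I. \<Sum>j\<in>I. b i *\<^sub>R v j) = (\<Sum>i\<in>I. b i) *\<^sub>R (\<Sum>i\<in>I. v i)"
    by (simp add: scaleR_sum_left scaleR_sum_right) (rule sum.swap)
  have f2: "(\<Sum>i\<in>I. \<Sum>j\<in>I. b j *\<^sub>R v i) = (\<Sum>i\<in>I. b i) *\<^sub>R (\<Sum>i\<in>I. v i)"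
    by (simp add: scaleR_sum_left scaleR_sum_right)
  have s2: "(\<Sum>i\<in>I. \<Sum>j\<in>I. b i *\<^sub>R v j + b j *\<^sub>R v i) = 2 *\<^sub>R ((\<Sum>i\<in>I. b i) *\<^sub>R (\<Sum>i\<in>I. v i))"
    by (simp only: sum.distrib f1 f2 scaleR_2)
  show ?thesis unfolding e by (simp only: sum_subtractf s1 s2)
qed


context sset
begin

definition "I0 = {..<CARD('n)+1} - {0}"

lemma I0_fin: "finite I0" unfolding I0_def by simp
lemma I0_card: "card I0 = CARD('n)" unfolding I0_def by simp
lemma I0_mem: "i \<in> I0 \<longleftrightarrow> i < CARD('n)+1 \<and> i \<noteq> 0" unfolding I0_def by auto

lemma sum_I0: "(\<Sum>k<CARD('n)+1. f k) = f 0 + (\<Sum>k\<in>I0. f k)"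
  unfolding I0_def by (subst sum.remove[of _ 0]) auto

definition "Sp z = (\<Sum>i\<in>I0. \<Sum>j\<in>I0 - {i}. rf (q i - q j) z)"

lemma Sp_formula: "Sp z = (real CARD('n) * (real CARD('n) - 1)) *\<^sub>R z - (2 * real CARD('n)) *\<^sub>R (z - (z \<bullet> q 0) *\<^sub>R q 0)"
proof -
  define c where "c = real CARD('n) / (real CARD('n) + 1)"
  define b where "b k = z \<bullet> q k" for k
  define D where "D i j = (b i - b j) *\<^sub>R (q i - q j)" for i j
  have r: "rf (q i - q j) z = z - c *\<^sub>R D i j" if "i \<in> I0" "j \<in> I0 - {i}" for i j
    using rf_formula[of i j z] that unfolding c_def D_def b_def I0_def by auto
  have DI: "(\<Sum>j\<in>I0 - {i}. D i j) = (\<Sum>j\<in>I0. D i j)" if "i \<in> I0" for i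
    using that I0_fin by (subst sum.remove[of I0 i]) (auto simp: D_def)
  have cardi: "card (I0 - {i}) = CARD('n) - 1" if "i \<in> I0" for i
    using that I0_fin I0_card by simp
  have Z: "(\<Sum>i\<in>I0. \<Sum>j\<in>I0 - {i}. z) = (real CARD('n) * (real CARD('n) - 1)) *\<^sub>R z"
  proof -
    have "(\<Sum>i\<in>I0. \<Sum>j\<in>I0 - {i}. z) = (\<Sum>i\<in>I0. (real CARD('n) - 1) *\<^sub>R z)"
    proof (intro sum.cong refl)
      fix i assume i: "i \<in> I0"
      have "(\<Sum>j\<in>I0 - {i}. z) = real (card (I0 - {i})) *\<^sub>R z" by (rule sum_constant_scaleR)
      also have "real (card (I0 - {i})) = real CARD('n) - 1"
        using cardi[OF i] by (simp add: of_nat_diff Suc_le_eq)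
      finally show "(\<Sum>j\<in>I0 - {i}. z) = (real CARD('n) - 1) *\<^sub>R z" .
    qed
    also have "\<dots> = real (card I0) *\<^sub>R ((real CARD('n) - 1) *\<^sub>R z)"
      by (rule sum_constant_scaleR)
    also have "\<dots> = (real CARD('n) * (real CARD('n) - 1)) *\<^sub>R z"
      by (simp only: I0_card scaleR_scaleR)
    finally show ?thesis .
  qed
  have V: "(\<Sum>i\<in>I0. b i *\<^sub>R q i) = ((real CARD('n) + 1) / real CARD('n)) *\<^sub>R z - b 0 *\<^sub>R q 0"
    using frame[of z] sum_I0[of "\<lambda>k. b k *\<^sub>R q k"] unfolding b_def by (simp add: algebra_simps)
  have B: "(\<Sum>i\<in>I0. b i) = - b 0"
    using sum_inner_zero[of z] sum_I0[of b] unfolding b_def by simp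
  have Q: "(\<Sum>i\<in>I0. q i) = - q 0"
    using sumq sum_I0[of q] by (simp add: eq_neg_iff_add_eq_0 add.commute)
  have DD: "(\<Sum>i\<in>I0. \<Sum>j\<in>I0. D i j) = (2 * (real CARD('n) + 1)) *\<^sub>R (z - b 0 *\<^sub>R q 0)"
  proof -
    have "(\<Sum>i\<in>I0. \<Sum>j\<in>I0. D i j) = (2 * real CARD('n)) *\<^sub>R (((real CARD('n) + 1) / real CARD('n)) *\<^sub>R z - b 0 *\<^sub>R q 0)
          - 2 *\<^sub>R (b 0 *\<^sub>R q 0)"
      unfolding D_def dsum_expand[OF I0_fin] V B Q I0_card by simp
    also have "\<dots> = (2 * (real CARD('n) + 1)) *\<^sub>R (z - b 0 *\<^sub>R q 0)"
    proof -
      have k: "(2 * real CARD('n)) * ((real CARD('n) + 1) / real CARD('n)) = 2 * (real CARD('n) + 1)"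
        using dpos by (simp add: field_simps)
      show ?thesis by (simp only: scaleR_right_diff_distrib scaleR_scaleR k) (simp add: algebra_simps)
    qed
    finally show ?thesis .
  qed
  have "Sp z = (\<Sum>i\<in>I0. \<Sum>j\<in>I0 - {i}. z - c *\<^sub>R D i j)"
    unfolding Sp_def by (intro sum.cong refl) (simp add: r)
  also have "\<dots> = (\<Sum>i\<in>I0. \<Sum>j\<in>I0 - {i}. z) - c *\<^sub>R (\<Sum>i\<in>I0. \<Sum>j\<in>I0 - {i}. D i j)"
    by (simp add: sum_subtractf scaleR_sum_right)
  also have "(\<Sum>i\<in>I0. \<Sum>j\<in>I0 - {i}. D i j) = (\<Sum>i\<in>I0. \<Sum>j\<in>I0. D i j)"
    by (rule sum.cong[OF refl]) (simp add: DI)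
  finally have e: "Sp z = (\<Sum>i\<in>I0. \<Sum>j\<in>I0 - {i}. z) - c *\<^sub>R (\<Sum>i\<in>I0. \<Sum>j\<in>I0. D i j)" .
  have cc: "c *\<^sub>R (2 * (real CARD('n) + 1)) *\<^sub>R (z - b 0 *\<^sub>R q 0) = (2 * real CARD('n)) *\<^sub>R (z - b 0 *\<^sub>R q 0)"
  proof -
    have "c * (2 * (real CARD('n) + 1)) = 2 * real CARD('n)"
      unfolding c_def by (simp add: field_simps)
    then show ?thesis by simp
  qed
  show ?thesis using e unfolding DD Z cc by (simp add: b_def)
qed


definition "PP = real CARD('n) * (real CARD('n) - 1)"
definition "rr = (real CARD('n) - 3) / (real CARD('n) - 1)"

lemma PP_pos: "PP > 0"
proof -
  have "real CARD('n) \<ge> 2" using d2 by simp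
  then show ?thesis unfolding PP_def by simp
qed

lemma Sp_lin: "Sp (c *\<^sub>R w) = c *\<^sub>R Sp w"
  unfolding Sp_def by (simp add: linear_scale[OF rf_linear] scaleR_sum_right)

lemma Sp_form2: "Sp z = PP *\<^sub>R ((z \<bullet> q 0) *\<^sub>R q 0 + rr *\<^sub>R (z - (z \<bullet> q 0) *\<^sub>R q 0))"
proof -
  define e where "e = z - (z \<bullet> q 0) *\<^sub>R q 0"
  have z: "z = (z \<bullet> q 0) *\<^sub>R q 0 + e" unfolding e_def by simp
  have k: "PP * rr = PP - 2 * real CARD('n)"
  proof -
    have "real CARD('n) \<ge> 2" using d2 by simp
    then show ?thesis unfolding PP_def rr_def by (simp add: field_simps)
  qed
  have "Sp z = PP *\<^sub>R z - (2 * real CARD('n)) *\<^sub>R e" unfolding e_def Sp_formula PP_def ..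
  also have "\<dots> = PP *\<^sub>R ((z \<bullet> q 0) *\<^sub>R q 0) + (PP - 2 * real CARD('n)) *\<^sub>R e"
    by (subst (1) z) (simp add: algebra_simps)
  also have "\<dots> = PP *\<^sub>R ((z \<bullet> q 0) *\<^sub>R q 0 + rr *\<^sub>R e)"
    by (simp add: k[symmetric] scaleR_right_distrib)
  finally show ?thesis unfolding e_def .
qed

lemma q00: "q 0 \<bullet> q 0 = 1" using qnorm[of 0] by simp

lemma T_form: "(1 / PP^2) *\<^sub>R Sp (Sp z) = (z \<bullet> q 0) *\<^sub>R q 0 + rr^2 *\<^sub>R (z - (z \<bullet> q 0) *\<^sub>R q 0)"
proof -
  define w where "w = (z \<bullet> q 0) *\<^sub>R q 0 + rr *\<^sub>R (z - (z \<bullet> q 0) *\<^sub>R q 0)"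
  have w0: "w \<bullet> q 0 = z \<bullet> q 0" unfolding w_def using q00 by (simp add: inner_diff_left inner_add_left)
  have "(1 / PP^2) *\<^sub>R Sp (Sp z) = (1 / PP^2) *\<^sub>R (PP *\<^sub>R Sp w)"
    unfolding Sp_form2[of z] w_def[symmetric] Sp_lin ..
  also have "\<dots> = (1 / PP^2 * PP * PP) *\<^sub>R ((z \<bullet> q 0) *\<^sub>R q 0 + rr *\<^sub>R (w - (z \<bullet> q 0) *\<^sub>R q 0))"
    unfolding Sp_form2[of w] w0 by simp
  also have "1 / PP^2 * PP * PP = 1" using PP_pos by (simp add: power2_eq_square)
  also have "w - (z \<bullet> q 0) *\<^sub>R q 0 = rr *\<^sub>R (z - (z \<bullet> q 0) *\<^sub>R q 0)" unfolding w_def by simp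
  finally show ?thesis by (simp add: power2_eq_square)
qed

lemma inner_Sp: "x \<bullet> Sp w = (\<Sum>i\<in>I0. \<Sum>j\<in>I0 - {i}. rf (q i - q j) x \<bullet> w)"
  unfolding Sp_def by (simp add: inner_sum_right rf_adj)

lemma pair_bound:
  assumes "\<And>i j. i \<in> I0 \<Longrightarrow> j \<in> I0 - {i} \<Longrightarrow> g i j \<le> M"
  shows "(\<Sum>i\<in>I0. \<Sum>j\<in>I0 - {i}. g i j) \<le> PP * M"
proof -
  have "(\<Sum>i\<in>I0. \<Sum>j\<in>I0 - {i}. g i j) \<le> (\<Sum>i\<in>I0. \<Sum>j\<in>I0 - {i}. M)"
    by (intro sum_mono) (use assms in auto)
  also have "\<dots> = (\<Sum>i\<in>I0. (real CARD('n) - 1) * M)"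
  proof (rule sum.cong[OF refl])
    fix i assume i: "i \<in> I0"
    have "card (I0 - {i}) = CARD('n) - 1" using i I0_fin I0_card by simp
    then have "real (card (I0 - {i})) = real CARD('n) - 1" using i by (simp add: of_nat_diff Suc_le_eq)
    then show "(\<Sum>j\<in>I0 - {i}. M) = (real CARD('n) - 1) * M" by simp
  qed
  also have "\<dots> = PP * M" unfolding PP_def by (simp add: I0_card)
  finally show ?thesis .
qed

lemma I0_idx: "i \<in> I0 \<Longrightarrow> j \<in> I0 - {i} \<Longrightarrow> i < CARD('n)+1 \<and> j < CARD('n)+1 \<and> i \<noteq> j"
  unfolding I0_def by auto

lemma FF_T: assumes "FF z" shows "FF ((1 / PP^2) *\<^sub>R Sp (Sp z))"
  unfolding FF_def
proof
  fix x
  have h1: "rf (q i - q j) x \<bullet> Sp z \<le> PP * u x" if ij: "i \<in> I0" "j \<in> I0 - {i}" for i j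
  proof -
    have "rf (q i - q j) x \<bullet> Sp z = (\<Sum>k\<in>I0. \<Sum>l\<in>I0 - {k}. rf (q k - q l) (rf (q i - q j) x) \<bullet> z)"
      by (rule inner_Sp)
    also have "\<dots> \<le> PP * u x"
    proof (rule pair_bound)
      fix k l assume kl: "k \<in> I0" "l \<in> I0 - {k}"
      have "rf (q k - q l) (rf (q i - q j) x) \<bullet> z \<le> u (rf (q k - q l) (rf (q i - q j) x))"
        using assms by (simp add: FF_def)
      also have "\<dots> = u x" using I0_idx[OF kl] I0_idx[OF ij] by (intro uinv2) auto
      finally show "rf (q k - q l) (rf (q i - q j) x) \<bullet> z \<le> u x" .
    qed
    finally show ?thesis .
  qed
  have "x \<bullet> Sp (Sp z) \<le> PP * (PP * u x)"
    unfolding inner_Sp[of x] by (rule pair_bound) (rule h1)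
  then have "(1 / PP^2) * (x \<bullet> Sp (Sp z)) \<le> (1 / PP^2) * (PP * (PP * u x))"
    by (rule mult_left_mono) simp
  also have "\<dots> = u x" using PP_pos by (simp add: power2_eq_square)
  finally show "x \<bullet> (1 / PP^2) *\<^sub>R Sp (Sp z) \<le> u x" by simp
qed


lemma FF_mq0: assumes d3: "CARD('n) \<ge> 3" shows "FF (m *\<^sub>R q 0)"
proof -
  obtain y where y: "y \<in> K" "u (q 0) = q 0 \<bullet> y" using u_attain by blast
  have ym: "y \<bullet> q 0 = m" using y(2) by (simp add: m_def inner_commute)
  define T where "T z = (1 / PP^2) *\<^sub>R Sp (Sp z)" for z
  define e where "e = y - m *\<^sub>R q 0"
  have e0: "e \<bullet> q 0 = 0" unfolding e_def using ym q00 by (simp add: inner_diff_left)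
  have it: "(T ^^ k) y = m *\<^sub>R q 0 + (rr^2)^k *\<^sub>R e \<and> FF ((T ^^ k) y)" for k
  proof (induction k)
    case 0
    then show ?case using FF_K[OF y(1)] by (simp add: e_def)
  next
    case (Suc k)
    define w where "w = m *\<^sub>R q 0 + (rr^2)^k *\<^sub>R e"
    have w0: "w \<bullet> q 0 = m" unfolding w_def using e0 q00 by (simp add: inner_add_left)
    have "T w = m *\<^sub>R q 0 + rr^2 *\<^sub>R ((rr^2)^k *\<^sub>R e)"
      unfolding T_def T_form w0 by (simp add: w_def)
    then have "T w = m *\<^sub>R q 0 + (rr^2)^(Suc k) *\<^sub>R e" by simp
    moreover have "FF (T w)"
    proof -
      have "FF w" unfolding w_def using Suc.IH by metis
      then show ?thesis unfolding T_def by (rule FF_T)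
    qed
    ultimately show ?case using Suc.IH w_def by simp
  qed
  show ?thesis unfolding FF_def
  proof
    fix x
    have le: "x \<bullet> (m *\<^sub>R q 0) + (rr^2)^k * (x \<bullet> e) \<le> u x" for k
    proof -
      have "FF (m *\<^sub>R q 0 + (rr^2)^k *\<^sub>R e)" using it[of k] by metis
      then have "x \<bullet> (m *\<^sub>R q 0 + (rr^2)^k *\<^sub>R e) \<le> u x" unfolding FF_def by blast
      then show ?thesis by (simp only: inner_add_right inner_scaleR_right)
    qed
    have d3r: "real CARD('n) \<ge> 3" using d3 by simp
    have r0: "rr \<ge> 0" unfolding rr_def using d3r by (intro divide_nonneg_nonneg) auto
    have r1: "rr < 1" unfolding rr_def using d3r by (subst pos_divide_less_eq) auto
    have "rr * rr \<le> rr * 1" by (rule mult_left_mono) (use r0 r1 in auto)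
    then have "rr^2 < 1" using r1 by (simp add: power2_eq_square)
    then have "norm (rr^2) < 1" using r0 by simp
    then have "(\<lambda>k. (rr^2)^k) \<longlonglongrightarrow> 0" by (rule LIMSEQ_power_zero)
    then have "(\<lambda>k. x \<bullet> (m *\<^sub>R q 0) + (rr^2)^k * (x \<bullet> e)) \<longlonglongrightarrow> x \<bullet> (m *\<^sub>R q 0) + 0 * (x \<bullet> e)"
      by (rule tendsto_add[OF tendsto_const tendsto_mult[OF _ tendsto_const]])
    then have lim: "(\<lambda>k. x \<bullet> (m *\<^sub>R q 0) + (rr^2)^k * (x \<bullet> e)) \<longlonglongrightarrow> x \<bullet> (m *\<^sub>R q 0)" by simp
    show "x \<bullet> (m *\<^sub>R q 0) \<le> u x"
      using LIMSEQ_le_const2[OF lim] le by blast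
  qed
qed

lemma max_xq: assumes "norm x = 1" shows "\<exists>k<CARD('n)+1. x \<bullet> q k \<ge> 1 / (2 * real CARD('n))"
proof (rule ccontr)
  assume "\<not> ?thesis"
  then have lt: "\<And>k. k < CARD('n)+1 \<Longrightarrow> x \<bullet> q k < 1 / (2 * real CARD('n))" by force
  have "(\<Sum>k<CARD('n)+1. (x \<bullet> q k) * (x \<bullet> q k)) \<le> (\<Sum>k<CARD('n)+1. 2 * max (x \<bullet> q k) 0 - x \<bullet> q k)"
  proof (rule sum_mono)
    fix k assume k: "k \<in> {..<CARD('n)+1}"
    have a: "\<bar>x \<bullet> q k\<bar> \<le> 1" using abs_xq[OF assms] k by simp
    show "(x \<bullet> q k) * (x \<bullet> q k) \<le> 2 * max (x \<bullet> q k) 0 - x \<bullet> q k"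
    proof (cases "x \<bullet> q k \<ge> 0")
      case True
      have "(x \<bullet> q k) * (x \<bullet> q k) \<le> (x \<bullet> q k) * 1" by (rule mult_left_mono) (use a True in auto)
      then show ?thesis using True by (simp add: max_def)
    next
      case False
      have "(- (x \<bullet> q k)) * (- (x \<bullet> q k)) \<le> (- (x \<bullet> q k)) * 1" by (rule mult_left_mono) (use a False in auto)
      then have "(x \<bullet> q k) * (x \<bullet> q k) \<le> - (x \<bullet> q k)" by simp
      then show ?thesis using False by (simp add: max_def)
    qed
  qed
  also have "\<dots> = 2 * (\<Sum>k<CARD('n)+1. max (x \<bullet> q k) 0) - (\<Sum>k<CARD('n)+1. x \<bullet> q k)"
    by (simp only: sum_subtractf sum_distrib_left)
  also have "\<dots> = 2 * (\<Sum>k<CARD('n)+1. max (x \<bullet> q k) 0)" using sum_inner_zero[of x] by simp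
  also have "\<dots> < 2 * (\<Sum>k<CARD('n)+1. 1 / (2 * real CARD('n)))"
  proof -
    have "(\<Sum>k<CARD('n)+1. max (x \<bullet> q k) 0) < (\<Sum>k<CARD('n)+1. 1 / (2 * real CARD('n)))"
      by (rule sum_strict_mono) (use lt in auto)
    then show ?thesis by (rule mult_strict_left_mono) simp
  qed
  also have "\<dots> = (real CARD('n) + 1) / real CARD('n)" using dpos by (simp add: field_simps)
  finally have s: "(\<Sum>k<CARD('n)+1. (x \<bullet> q k) * (x \<bullet> q k)) < (real CARD('n) + 1) / real CARD('n)" .
  have "1 = x \<bullet> x" using assms by (simp add: dot_square_norm)
  also have "\<dots> = (real CARD('n) / (real CARD('n) + 1)) * (\<Sum>k<CARD('n)+1. (x \<bullet> q k) * (x \<bullet> q k))"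
    by (rule frame_inner)
  also have "\<dots> < (real CARD('n) / (real CARD('n) + 1)) * ((real CARD('n) + 1) / real CARD('n))"
    by (rule mult_strict_left_mono[OF s]) simp
  also have "\<dots> = 1" by simp
  finally show False by simp
qed

lemma lower3: assumes "CARD('n) \<ge> 3" "norm x = 1" shows "u x \<ge> m / (2 * real CARD('n))"
proof -
  obtain k where k: "k < CARD('n)+1" "x \<bullet> q k \<ge> 1 / (2 * real CARD('n))" using max_xq[OF assms(2)] by blast
  have "FF (m *\<^sub>R q k)" by (rule FF_trans[OF FF_mq0[OF assms(1)] k(1)])
  then have "m * (x \<bullet> q k) \<le> u x" by (simp add: FF_def)
  moreover have "m * (1 / (2 * real CARD('n))) \<le> m * (x \<bullet> q k)"
    by (rule mult_left_mono) (use k(2) mpos in auto)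
  ultimately show ?thesis by simp
qed

end

lemma poly_id:
  fixes c0 c1 b0 b1 :: real
  shows "2 * ((c0*b0 + c1*b1 + (-c0-c1)*(-b0-b1))^2 + (c0*(-b0-b1) + c1*b0 + (-c0-c1)*b1)^2 + (c0*b1 + c1*(-b0-b1) + (-c0-c1)*b0)^2)
     = 3 * ((c0^2 + c1^2 + (-c0-c1)^2) * (b0^2 + b1^2 + (-b0-b1)^2))"
  by algebra

lemma three_bound:
  fixes a0 a1 a2 M :: real
  assumes "a0 + a1 + a2 = 0" "a0 \<le> M" "a1 \<le> M" "a2 \<le> M"
  shows "a0^2 + a1^2 + a2^2 \<le> 6 * M^2" "M \<ge> 0"
proof -
  show M0: "M \<ge> 0" using assms by linarith
  have h0: "(M - a0) * (a0 + 2*M) \<ge> 0" using assms by (intro mult_nonneg_nonneg) linarith+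
  have h1: "(M - a1) * (a1 + 2*M) \<ge> 0" using assms by (intro mult_nonneg_nonneg) linarith+
  have h2: "(M - a2) * (a2 + 2*M) \<ge> 0" using assms by (intro mult_nonneg_nonneg) linarith+
  have "(M - a0) * (a0 + 2*M) + (M - a1) * (a1 + 2*M) + (M - a2) * (a2 + 2*M) = 6 * M^2 - (a0^2 + a1^2 + a2^2) - M * (a0 + a1 + a2)"
    by (simp add: algebra_simps power2_eq_square)
  then show "a0^2 + a1^2 + a2^2 \<le> 6 * M^2" using h0 h1 h2 assms(1) by simp
qed

lemma final_d2:
  fixes c0 c1 c2 b0 b1 b2 m M :: real
  assumes c: "c0 + c1 + c2 = 0" and b: "b0 + b1 + b2 = 0" and n: "(2/3) * (c0^2 + c1^2 + c2^2) = 1"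
    and m: "m > 0" "b0 = m"
    and M: "(2/3) * (c0*b0 + c1*b1 + c2*b2) \<le> M" "(2/3) * (c0*b2 + c1*b0 + c2*b1) \<le> M" "(2/3) * (c0*b1 + c1*b2 + c2*b0) \<le> M"
  shows "M \<ge> m / 4"
proof -
  define a0 where "a0 = (2/3) * (c0*b0 + c1*b1 + c2*b2)"
  define a1 where "a1 = (2/3) * (c0*b2 + c1*b0 + c2*b1)"
  define a2 where "a2 = (2/3) * (c0*b1 + c1*b2 + c2*b0)"
  have c2: "c2 = -c0-c1" using c by simp
  have b2: "b2 = -b0-b1" using b by simp
  have "2 * (a0^2 + a1^2 + a2^2) = (4/9) * (2 * ((c0*b0 + c1*b1 + c2*b2)^2 + (c0*b2 + c1*b0 + c2*b1)^2 + (c0*b1 + c1*b2 + c2*b0)^2))"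
  proof -
    have p: "\<And>X::real. ((2/3)*X)^2 = (4/9)*X^2" by (simp add: power_mult_distrib power2_eq_square)
    have g: "\<And>A B C::real. 2*(4/9*A+4/9*B+4/9*C) = 4/9*(2*(A+B+C))" by simp
    show ?thesis unfolding a0_def a1_def a2_def p by (rule g)
  qed
  also have "\<dots> = (4/9) * (3 * ((c0^2 + c1^2 + c2^2) * (b0^2 + b1^2 + b2^2)))"
    using poly_id[of c0 b0 c1 b1] unfolding c2 b2 by simp
  also have "\<dots> = 2 * (b0^2 + b1^2 + b2^2)"
  proof -
    have Sc: "c0^2 + c1^2 + c2^2 = 3/2" using n by simp
    show ?thesis by (simp only: Sc)
  qed
  finally have e: "a0^2 + a1^2 + a2^2 = b0^2 + b1^2 + b2^2" by simp
  have "a0 + a1 + a2 = (2/3) * ((c0 + c1 + c2) * (b0 + b1 + b2))"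
    unfolding a0_def a1_def a2_def by (simp add: algebra_simps add_divide_distrib)
  then have s: "a0 + a1 + a2 = 0" using c by simp
  have tb: "a0^2 + a1^2 + a2^2 \<le> 6 * M^2" "M \<ge> 0"
    using three_bound[OF s] M unfolding a0_def a1_def a2_def by auto
  have "m^2 \<le> b0^2 + b1^2 + b2^2" using m by simp
  then have "m^2 \<le> 6 * M^2" using e tb by simp
  show ?thesis
  proof (rule ccontr)
    assume "\<not> ?thesis"
    then have "M < m/4" by simp
    then have "M * M < (m/4) * (m/4)" using tb(2) by (intro mult_strict_mono) auto
    then show False using \<open>m^2 \<le> 6 * M^2\<close> zero_le_square[of M] unfolding power2_eq_square by linarith
  qed
qed

context sset
begin

lemma sum3: assumes "CARD('n) = 2" shows "(\<Sum>k<CARD('n)+1. f k) = f 0 + f 1 + f 2"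
proof -
  have "{..<CARD('n)+1} = {0, 1, 2::nat}" using assms by auto
  then show ?thesis by (simp add: add.assoc)
qed

lemma lower2: assumes d: "CARD('n) = 2" and x: "norm x = 1" shows "u x \<ge> m / (2 * real CARD('n))"
proof -
  have i3: "(0::nat) < CARD('n)+1" "(1::nat) < CARD('n)+1" "(2::nat) < CARD('n)+1" using d by auto
  obtain y where y: "y \<in> K" "u (q 0) = q 0 \<bullet> y" using u_attain by blast
  define R where "R w = rf (q 0 - q 1) (rf (q 1 - q 2) w)" for w
  have adj: "R w \<bullet> q k = w \<bullet> rf (q 1 - q 2) (rf (q 0 - q 1) (q k))" for w k
    unfolding R_def by (simp add: rf_adj)
  have r0: "rf (q 1 - q 2) (rf (q 0 - q 1) (q 0)) = q 2"
    using rf_q[of 0 1 0] rf_q[of 1 2 1] i3 by simp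
  have r1: "rf (q 1 - q 2) (rf (q 0 - q 1) (q 1)) = q 0"
    using rf_q[of 0 1 1] rf_q[of 1 2 0] i3 by simp
  have r2: "rf (q 1 - q 2) (rf (q 0 - q 1) (q 2)) = q 1"
    using rf_q[of 0 1 2] rf_q[of 1 2 2] i3 by simp
  have c0: "R w \<bullet> q 0 = w \<bullet> q 2" and c1: "R w \<bullet> q 1 = w \<bullet> q 0" and c2: "R w \<bullet> q 2 = w \<bullet> q 1" for w
    using adj r0 r1 r2 by simp_all
  have FFR: "FF w \<Longrightarrow> FF (R w)" for w unfolding R_def by (rule FF_rf) (use i3 in auto)
  have Fy: "FF y" by (rule FF_K[OF y(1)])
  have dd: "real CARD('n) / (real CARD('n) + 1) = 2/3" using d by simp
  have fi: "x \<bullet> z = (2/3) * ((x \<bullet> q 0) * (z \<bullet> q 0) + (x \<bullet> q 1) * (z \<bullet> q 1) + (x \<bullet> q 2) * (z \<bullet> q 2))" for z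
    using frame_inner[of x z] unfolding sum3[OF d] dd by simp
  have le: "x \<bullet> w \<le> u x" if "FF w" for w using that by (simp add: FF_def)
  have M0: "(2/3) * ((x \<bullet> q 0) * (y \<bullet> q 0) + (x \<bullet> q 1) * (y \<bullet> q 1) + (x \<bullet> q 2) * (y \<bullet> q 2)) \<le> u x"
    using le[OF Fy] fi[of y] by simp
  have M1: "(2/3) * ((x \<bullet> q 0) * (y \<bullet> q 2) + (x \<bullet> q 1) * (y \<bullet> q 0) + (x \<bullet> q 2) * (y \<bullet> q 1)) \<le> u x"
    using le[OF FFR[OF Fy]] by (simp only: fi[of "R y"] c0 c1 c2)
  have M2: "(2/3) * ((x \<bullet> q 0) * (y \<bullet> q 1) + (x \<bullet> q 1) * (y \<bullet> q 2) + (x \<bullet> q 2) * (y \<bullet> q 0)) \<le> u x"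
    using le[OF FFR[OF FFR[OF Fy]]] by (simp only: fi[of "R (R y)"] c0 c1 c2)
  have cs: "x \<bullet> q 0 + x \<bullet> q 1 + x \<bullet> q 2 = 0" using sum_inner_zero[of x] unfolding sum3[OF d] .
  have bs: "y \<bullet> q 0 + y \<bullet> q 1 + y \<bullet> q 2 = 0" using sum_inner_zero[of y] unfolding sum3[OF d] .
  have "x \<bullet> x = 1" using x by (simp add: dot_square_norm)
  then have n: "(2/3) * ((x \<bullet> q 0)^2 + (x \<bullet> q 1)^2 + (x \<bullet> q 2)^2) = 1"
    using fi[of x] by (simp add: power2_eq_square)
  have ym: "y \<bullet> q 0 = m" using y(2) by (simp add: m_def inner_commute)
  have "u x \<ge> m / 4"
    by (rule final_d2[OF cs bs n mpos ym M0 M1 M2])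
  then show ?thesis using d by simp
qed

lemma lower: assumes "norm x = 1" shows "u x \<ge> m / (2 * real CARD('n))"
proof (cases "CARD('n) = 2")
  case True then show ?thesis using lower2 assms by blast
next
  case False
  then have "CARD('n) \<ge> 3" using d2 by simp
  then show ?thesis using lower3 assms by blast
qed

end

lemma int_bound:
  fixes u :: "real ^ 'n \<Rightarrow> real"
  assumes p: "p < 0" and L: "L > 0" and lb: "\<forall>x\<in>sphere 0 1. u x \<ge> L" and u0: "u 0 = 0"
    and eq: "sphere_integral (\<lambda>x. u x powr p) = sphere_area TYPE('n)"
  shows "L \<le> 1"
proof -
  define g where "g x = u (x /\<^sub>R norm x) powr p" for x :: "real ^ 'n"
  define A where "A = integral (cball (0::real^'n) 1) (\<lambda>x. 1::real)"
  have hi: "((\<lambda>x. 1::real) has_integral measure lborel (cball (0::real^'n) 1)) (cball (0::real^'n) 1)"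
  proof -
    have "emeasure lborel (cball (0::real^'n) 1) < \<infinity>" by (rule emeasure_bounded_finite) simp
    then show ?thesis using has_integral_measure_lborel[of "cball (0::real^'n) 1"] by simp
  qed
  then have "A = measure lborel (cball (0::real^'n) 1)" unfolding A_def by (rule integral_unique)
  then have Apos: "A > 0" by simp
  have "real CARD('n) * integral (cball 0 1) g = real CARD('n) * A"
    using eq unfolding sphere_integral_def sphere_area_def g_def A_def by simp
  then have gA: "integral (cball 0 1) g = A" by simp
  have pt: "g x \<le> L powr p" if "x \<in> cball 0 1" for x
  proof (cases "x = 0")
    case True then show ?thesis unfolding g_def using u0 by simp
  next
    case False
    then have "x /\<^sub>R norm x \<in> sphere 0 1" by simp
    then have "u (x /\<^sub>R norm x) \<ge> L" using lb by blast
    then show ?thesis unfolding g_def using p L by (intro powr_mono2') auto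
  qed
  show ?thesis
  proof (cases "g integrable_on cball 0 1")
    case True
    note gi = True
    have ci: "(\<lambda>x. L powr p) integrable_on cball (0::real^'n) 1" by (rule integrable_on_const) simp
    have "A \<le> integral (cball (0::real^'n) 1) (\<lambda>x. L powr p)"
      unfolding gA[symmetric] using integral_le[OF gi ci pt] by simp
    also have "integral (cball (0::real^'n) 1) (\<lambda>x. L powr p) = L powr p * A"
      unfolding A_def using integral_mult_right[of "cball (0::real^'n) 1" "L powr p" "\<lambda>x. 1"] by simp
    finally have "1 * A \<le> L powr p * A" by simp
    then have "1 \<le> L powr p" using Apos by (rule mult_right_le_imp_le)
    then show ?thesis using powr_less_one[of L p] p by force
  next
    case False
    then have "integral (cball 0 1) g = 0" by (rule not_integrable_integral)
    then show ?thesis using gA Apos by simp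
  qed
qed

theorem lemma5p1:
  fixes p :: real
  assumes "CARD('n) \<ge> 2" and "p < 0"
  shows "\<exists>C > 0. \<forall>q :: nat \<Rightarrow> real ^ 'n. regular_simplex q \<longrightarrow>
           (\<forall>u \<in> classB q p. \<forall>x \<in> sphere 0 1. u x \<le> C)"
proof (intro exI[of _ "2 * real CARD('n) ^ 2"] conjI allI impI ballI)
  show "0 < 2 * real CARD('n) ^ 2" by simp
  fix q :: "nat \<Rightarrow> real ^ 'n" and u x
  assume rs: "regular_simplex q" and uB: "u \<in> classB q p" and x: "x \<in> sphere (0::real^'n) 1"
  from uB obtain K where K: "compact K" "interior K \<noteq> {}" "u = support_fun K"
      and pos: "\<forall>x\<in>sphere 0 1. u x > 0"
      and sym: "symmetric_wrt q u" and ieq: "sphere_integral (\<lambda>x. u x powr p) = sphere_area TYPE('n)"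
    unfolding classB_def Hstar_plus_def by blast
  have neK: "K \<noteq> {}" using K(2) interior_subset by blast
  interpret sset q K u
    by unfold_locales (use rs assms(1) K neK pos sym in \<open>auto simp: symmetric_wrt_def\<close>)
  have L: "m / (2 * real CARD('n)) > 0" using mpos by simp
  have "m / (2 * real CARD('n)) \<le> 1"
  proof (rule int_bound[OF assms(2) L _ _ ieq])
    show "\<forall>x\<in>sphere 0 1. m / (2 * real CARD('n)) \<le> u x" using lower by simp
    show "u 0 = 0" using K(3) supp_zero[OF neK] by simp
  qed
  then have m2: "m \<le> 2 * real CARD('n)" by (simp add: field_simps)
  have "u x \<le> real CARD('n) * m" using upper x by simp
  also have "\<dots> \<le> real CARD('n) * (2 * real CARD('n))" using m2 by (intro mult_left_mono) auto
  also have "\<dots> = 2 * real CARD('n) ^ 2" by (simp add: power2_eq_square)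
  finally show "u x \<le> 2 * real CARD('n) ^ 2" .
qed

end
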